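(* Let $M$ be the set consisting of the empty composition together with all Fibonacci compositions of multiples of $3$ that start with a part $1$; it is a free monoid under concatenation. Give a composition of $3n$ weight $n$. Then the number of primes of $M$ of weight $n$ is the coefficient of $x^n$ in $\dfrac{2x}{1-2x-x^2}$ (i.e. $a_0=0$, $a_1=2$, $a_n=2a_{n-1}+a_{n-2}$ for $n\ge2$), and consequently $$1+\sum_{n\ge1}F_{3n}x^n=1+\frac{2x}{1-4x-x^2}=\Bigl(1-\frac{2x}{1-2x-x^2}\Bigr)^{-1}.$$
   Context: A Fibonacci composition of $N$ is a sequence of parts each equal to $1$ or $2$ with sum $N$. A free monoid is one in which every element factors uniquely as a product of primes (nonempty elements not expressible as a product of two nonempty elements of the monoid). Fibonacci numbers: $F_0=0$, $F_1=1$, $F_n=F_{n-1}+F_{n-2}$. *)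

theory Defs
  imports Main "HOL-Computational_Algebra.Formal_Power_Series" "HOL-Number_Theory.Fib"
begin

definition fib_comp :: "nat \<Rightarrow> nat list \<Rightarrow> bool" where
  "fib_comp N c \<longleftrightarrow> set c \<subseteq> {1, 2} \<and> sum_list c = N"

definition M3 :: "nat list set" where
  "M3 = {[]} \<union> {c. \<exists>k. fib_comp (3 * k) c \<and> c \<noteq> [] \<and> hd c = 1}"

definition weight :: "nat list \<Rightarrow> nat" where
  "weight c = sum_list c div 3"

definition monoid_primes :: "'a list set \<Rightarrow> 'a list set" where
  "monoid_primes S = {p \<in> S. p \<noteq> [] \<and>
      \<not> (\<exists>u v. u \<in> S \<and> v \<in> S \<and> u \<noteq> [] \<and> v \<noteq> [] \<and> p = u @ v)}"

definition free_monoid :: "'a list set \<Rightarrow> bool" where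
  "free_monoid S \<longleftrightarrow> (\<forall>w \<in> S. \<exists>!ps. (\<forall>p \<in> set ps. p \<in> monoid_primes S) \<and> concat ps = w)"

end

theory Submission
  imports Defs
begin

definition comps :: "nat \<Rightarrow> nat list set" where
  "comps N = {c. set c \<subseteq> {1,2} \<and> sum_list c = N}"

lemma comps_0: "comps 0 = {[]}"
proof -
  have "c = []" if "set c \<subseteq> {1,2}" "sum_list c = 0" for c :: "nat list"
    using that by (cases c) auto
  thus ?thesis unfolding comps_def by auto
qed

lemma comps_1: "comps (Suc 0) = {[1]}"
proof -
  have "c = [1]" if "set c \<subseteq> {1,2}" "sum_list c = Suc 0" for c :: "nat list"
  proof (cases c)
    case Nil then show ?thesis using that by simp
  next
    case (Cons x c')
    then have "x = 1" "sum_list c' = 0" "set c' \<subseteq> {1,2}" using that by auto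
    moreover have "c' = []" using calculation by (cases c') auto
    ultimately show ?thesis using Cons by simp
  qed
  thus ?thesis unfolding comps_def by auto
qed

lemma comps_SS: "comps (Suc (Suc N)) = (#) 1 ` comps (Suc N) \<union> (#) 2 ` comps N"
proof
  show "comps (Suc (Suc N)) \<subseteq> (#) 1 ` comps (Suc N) \<union> (#) 2 ` comps N"
  proof
    fix c assume c: "c \<in> comps (Suc (Suc N))"
    then obtain x c' where cc: "c = x # c'" unfolding comps_def by (cases c) auto
    with c have "x = 1 \<or> x = 2" "set c' \<subseteq> {1,2}" "x + sum_list c' = Suc (Suc N)"
      unfolding comps_def by auto
    then show "c \<in> (#) 1 ` comps (Suc N) \<union> (#) 2 ` comps N"
      unfolding comps_def cc by auto
  qed
qed (auto simp: comps_def)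

lemma comps_card: "finite (comps N) \<and> card (comps N) = fib (Suc N)"
proof (induction N rule: fib.induct)
  case 1 then show ?case by (simp add: comps_0)
next
  case 2 then show ?case by (simp add: comps_1)
next
  case (3 n)
  have d: "(#) 1 ` comps (Suc n) \<inter> (#) 2 ` comps n = {}" by auto
  have "card (comps (Suc (Suc n))) = card ((#) 1 ` comps (Suc n)) + card ((#) 2 ` comps n)"
    unfolding comps_SS using 3 d by (intro card_Un_disjoint) auto
  also have "\<dots> = card (comps (Suc n)) + card (comps n)"
    by (simp add: card_image)
  finally show ?case using 3 by (simp add: comps_SS)
qed

lemma M3_iff: "c \<in> M3 \<longleftrightarrow> set c \<subseteq> {1,2} \<and> 3 dvd sum_list c \<and> (c \<noteq> [] \<longrightarrow> hd c = 1)"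
  unfolding M3_def fib_comp_def by (cases c) (auto simp: dvd_def)

lemma M3_Nil [simp]: "[] \<in> M3" by (simp add: M3_iff)

lemma M3_append: "u \<in> M3 \<Longrightarrow> v \<in> M3 \<Longrightarrow> u @ v \<in> M3"
  by (auto simp: M3_iff hd_append)

lemma M3_concat: "\<forall>p\<in>set ps. p \<in> M3 \<Longrightarrow> concat ps \<in> M3"
  by (induction ps) (auto intro: M3_append)

lemma primes_M3: "p \<in> monoid_primes M3 \<Longrightarrow> p \<in> M3 \<and> p \<noteq> []"
  by (simp add: monoid_primes_def)

lemma M3_mid: "p \<in> M3 \<Longrightarrow> p @ v \<in> M3 \<Longrightarrow> v @ w \<in> M3 \<Longrightarrow> v \<noteq> [] \<Longrightarrow> v \<in> M3"
  by (auto simp: M3_iff dvd_add_right_iff)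

lemma prime_inj:
  assumes p: "p \<in> monoid_primes M3" and q: "q \<in> monoid_primes M3"
    and w: "w \<in> M3" and w': "w' \<in> M3" and eq: "p @ w = q @ w'"
  shows "p = q"
proof -
  from eq obtain us where "p = q @ us \<and> us @ w = w' \<or> p @ us = q \<and> w = us @ w'"
    by (auto simp: append_eq_append_conv2)
  then show ?thesis
  proof
    assume h: "p = q @ us \<and> us @ w = w'"
    show ?thesis
    proof (rule ccontr)
      assume "p \<noteq> q"
      then have "us \<noteq> []" using h by auto
      then have "us \<in> M3" using M3_mid[of q us w] h primes_M3[OF p] primes_M3[OF q] w' by auto
      then show False using p h primes_M3[OF q] \<open>us \<noteq> []\<close> unfolding monoid_primes_def by blast
    qed
  next
    assume h: "p @ us = q \<and> w = us @ w'"
    show ?thesis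
    proof (rule ccontr)
      assume "p \<noteq> q"
      then have "us \<noteq> []" using h by auto
      then have "us \<in> M3" using M3_mid[of p us w'] h primes_M3[OF p] primes_M3[OF q] w by auto
      then show False using q h primes_M3[OF p] \<open>us \<noteq> []\<close> unfolding monoid_primes_def by blast
    qed
  qed
qed

lemma decomp: "x \<in> M3 \<Longrightarrow> x \<noteq> [] \<Longrightarrow> \<exists>p w. p \<in> monoid_primes M3 \<and> w \<in> M3 \<and> x = p @ w"
proof (induction "length x" arbitrary: x rule: less_induct)
  case less
  show ?case
  proof (cases "x \<in> monoid_primes M3")
    case True then show ?thesis by (intro exI[of _ x] exI[of _ "[]"]) simp
  next
    case False
    then obtain u v where uv: "u \<in> M3" "v \<in> M3" "u \<noteq> []" "v \<noteq> []" "x = u @ v"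
      using less.prems unfolding monoid_primes_def by blast
    then obtain p w where "p \<in> monoid_primes M3" "w \<in> M3" "u = p @ w"
      using less.hyps[of u] by auto
    then show ?thesis using uv by (intro exI[of _ p] exI[of _ "w @ v"]) (auto intro: M3_append)
  qed
qed

lemma free: "free_monoid M3"
  unfolding free_monoid_def
proof
  fix w assume w: "w \<in> M3"
  have ex: "\<exists>ps. (\<forall>p \<in> set ps. p \<in> monoid_primes M3) \<and> concat ps = x" if "x \<in> M3" for x
    using that
  proof (induction "length x" arbitrary: x rule: less_induct)
    case less
    show ?case
    proof (cases "x = []")
      case True then show ?thesis by (intro exI[of _ "[]"]) simp
    next
      case False
      then obtain p w where pw: "p \<in> monoid_primes M3" "w \<in> M3" "x = p @ w"
        using decomp less.prems by blast
      then have "length w < length x" using primes_M3[OF pw(1)] by simp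
      then obtain ps where "(\<forall>p \<in> set ps. p \<in> monoid_primes M3) \<and> concat ps = w"
        using less.hyps pw by blast
      then show ?thesis using pw by (intro exI[of _ "p # ps"]) auto
    qed
  qed
  have uniq: "ps = qs" if "\<forall>p \<in> set ps. p \<in> monoid_primes M3" "\<forall>p \<in> set qs. p \<in> monoid_primes M3"
    "concat ps = concat qs" for ps qs
    using that
  proof (induction ps arbitrary: qs)
    case Nil
    have "\<forall>q\<in>set qs. q = []" using Nil.prems(3)[symmetric] by simp
    then show ?case using Nil.prems(2) primes_M3 by (cases qs) auto
  next
    case (Cons p ps)
    have "p \<noteq> []" using Cons.prems(1) primes_M3 by simp
    then have "qs \<noteq> []" using Cons.prems(3) by auto
    then obtain q qs' where qs: "qs = q # qs'" by (cases qs) auto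
    have c1: "concat ps \<in> M3" "concat qs' \<in> M3"
      using Cons.prems qs primes_M3 by (simp_all add: M3_concat)
    have pq: "p \<in> monoid_primes M3" "q \<in> monoid_primes M3"
      using Cons.prems(1,2) qs by auto
    have eq: "p @ concat ps = q @ concat qs'" using Cons.prems(3) qs by simp
    have "p = q" by (rule prime_inj[OF pq c1 eq])
    then have "concat ps = concat qs'" using eq by simp
    moreover have "\<forall>p \<in> set ps. p \<in> monoid_primes M3" "\<forall>p \<in> set qs'. p \<in> monoid_primes M3"
      using Cons.prems(1,2) qs by auto
    ultimately have "ps = qs'" using Cons.IH by blast
    then show ?case using qs \<open>p = q\<close> by simp
  qed
  show "\<exists>!ps. (\<forall>p \<in> set ps. p \<in> monoid_primes M3) \<and> concat ps = w"
    using ex[OF w] uniq by blast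
qed



definition Mn :: "nat \<Rightarrow> nat list set" where "Mn n = {c \<in> M3. weight c = n}"
definition Pn :: "nat \<Rightarrow> nat list set" where "Pn n = {c \<in> monoid_primes M3. weight c = n}"

lemma M3_sum: "c \<in> M3 \<Longrightarrow> sum_list c = 3 * weight c"
  unfolding weight_def M3_iff by auto

lemma weight_append: "u \<in> M3 \<Longrightarrow> v \<in> M3 \<Longrightarrow> weight (u @ v) = weight u + weight v"
proof -
  assume "u \<in> M3" "v \<in> M3"
  then have "sum_list (u @ v) = 3 * (weight u + weight v)" using M3_sum by simp
  then show ?thesis unfolding weight_def by simp
qed

lemma Mn_sub: "Mn n \<subseteq> comps (3 * n)"
  unfolding Mn_def comps_def using M3_sum by (auto simp: M3_iff)

lemma finite_Mn: "finite (Mn n)"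
  using Mn_sub comps_card finite_subset by blast

lemma finite_Pn: "finite (Pn n)"
proof -
  have "Pn n \<subseteq> Mn n" unfolding Pn_def Mn_def using primes_M3 by auto
  then show ?thesis using finite_Mn finite_subset by blast
qed

lemma Mn_0: "Mn 0 = {[]}"
proof -
  have "[] \<in> Mn 0" unfolding Mn_def by (simp add: weight_def)
  then show ?thesis using Mn_sub[of 0] comps_0 by auto
qed

lemma Mn_pos: "n > 0 \<Longrightarrow> Mn n = (#) 1 ` comps (3 * n - 1)"
proof
  assume n: "n > 0"
  show "Mn n \<subseteq> (#) 1 ` comps (3 * n - 1)"
  proof
    fix c assume c: "c \<in> Mn n"
    then have cc: "c \<in> comps (3 * n)" "c \<in> M3" using Mn_sub Mn_def by auto
    then have "c \<noteq> []" using n unfolding comps_def by auto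
    then obtain x c' where xc: "c = x # c'" by (cases c) auto
    then have "x = 1" using cc \<open>c \<noteq> []\<close> by (simp add: M3_iff)
    then have "c' \<in> comps (3 * n - 1)" using cc xc unfolding comps_def by auto
    then show "c \<in> (#) 1 ` comps (3 * n - 1)" using xc \<open>x = 1\<close> by auto
  qed
next
  assume n: "n > 0"
  show "(#) 1 ` comps (3 * n - 1) \<subseteq> Mn n"
  proof
    fix c assume "c \<in> (#) 1 ` comps (3 * n - 1)"
    then obtain c' where c': "c = 1 # c'" "set c' \<subseteq> {1,2}" "sum_list c' = 3 * n - 1"
      unfolding comps_def by auto
    then have s: "sum_list c = 3 * n" using n by simp
    then have "c \<in> M3" using c' by (simp add: M3_iff)
    moreover have "weight c = n" using s by (simp add: weight_def)
    ultimately show "c \<in> Mn n" unfolding Mn_def by simp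
  qed
qed

lemma card_Mn: "card (Mn n) = (if n = 0 then 1 else fib (3 * n))"
proof (cases "n = 0")
  case True then show ?thesis by (simp add: Mn_0)
next
  case False
  then have "card (Mn n) = card (comps (3 * n - 1))" by (simp add: Mn_pos card_image)
  also have "\<dots> = fib (Suc (3 * n - 1))" using comps_card by blast
  also have "\<dots> = fib (3 * n)" using False by (simp add: Suc_diff_1)
  finally show ?thesis using False by simp
qed

lemma conv: "card (Mn n - {[]}) = (\<Sum>k=0..n. card (Pn k) * card (Mn (n - k)))"
proof -
  define S where "S = (\<Union>k\<in>{0..n}. Pn k \<times> Mn (n - k))"
  have disj: "\<forall>i\<in>{0..n}. \<forall>j\<in>{0..n}. i \<noteq> j \<longrightarrow> (Pn i \<times> Mn (n - i)) \<inter> (Pn j \<times> Mn (n - j)) = {}"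
    unfolding Pn_def by auto
  have "card S = (\<Sum>k=0..n. card (Pn k \<times> Mn (n - k)))"
    unfolding S_def using disj by (intro card_UN_disjoint) (auto simp: finite_Pn finite_Mn)
  also have "\<dots> = (\<Sum>k=0..n. card (Pn k) * card (Mn (n - k)))"
    by (simp add: card_cartesian_product)
  finally have cS: "card S = \<dots>" .
  have inj: "inj_on (\<lambda>(p, w). p @ w) S"
  proof (rule inj_onI)
    fix a b assume ab: "a \<in> S" "b \<in> S" "(\<lambda>(p, w). p @ w) a = (\<lambda>(p, w). p @ w) b"
    obtain p w where a: "a = (p, w)" by (cases a)
    obtain q w' where b: "b = (q, w')" by (cases b)
    have eq: "p @ w = q @ w'" using ab a b by simp
    have "p \<in> monoid_primes M3" "q \<in> monoid_primes M3" "w \<in> M3" "w' \<in> M3"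
      using ab a b unfolding S_def Pn_def Mn_def by auto
    then have "p = q" using prime_inj[OF _ _ _ _ eq] by blast
    then show "a = b" using eq a b by simp
  qed
  have img: "(\<lambda>(p, w). p @ w) ` S = Mn n - {[]}"
  proof
    show "(\<lambda>(p, w). p @ w) ` S \<subseteq> Mn n - {[]}"
    proof
      fix x assume "x \<in> (\<lambda>(p, w). p @ w) ` S"
      then obtain p w k where k: "k \<in> {0..n}" and p: "p \<in> Pn k" and w: "w \<in> Mn (n - k)"
        and x: "x = p @ w" unfolding S_def by auto
      then have pp: "p \<in> M3" "p \<noteq> []" "w \<in> M3" "weight p = k" "weight w = n - k"
        unfolding Pn_def Mn_def using primes_M3 by auto
      then have "weight (p @ w) = n" using weight_append[OF pp(1) pp(3)] k by simp
      then show "x \<in> Mn n - {[]}" using pp M3_append x unfolding Mn_def by auto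
    qed
  next
    show "Mn n - {[]} \<subseteq> (\<lambda>(p, w). p @ w) ` S"
    proof
      fix x assume x: "x \<in> Mn n - {[]}"
      then obtain p w where pw: "p \<in> monoid_primes M3" "w \<in> M3" "x = p @ w"
        using decomp unfolding Mn_def by blast
      have "p \<in> M3" using primes_M3 pw(1) by blast
      then have "weight x = weight p + weight w" using weight_append pw by simp
      then have "weight p + weight w = n" using x unfolding Mn_def by simp
      then have "(p, w) \<in> S" unfolding S_def Pn_def Mn_def using pw
        by (intro UN_I[of "weight p"]) auto
      then show "x \<in> (\<lambda>(p, w). p @ w) ` S" unfolding pw(3) by (rule image_eqI[rotated]) simp
    qed
  qed
  have "card (Mn n - {[]}) = card S" using card_image[OF inj] img by simp
  then show ?thesis using cS by simp
qed

lemma fib3: "fib (Suc (Suc (Suc (Suc (Suc (Suc m)))))) = 4 * fib (Suc (Suc (Suc m))) + fib m"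
  by simp

lemma card_Pn0: "card (Pn 0) = 0"
  using conv[of 0] by (simp add: Mn_0)

lemma Mn_nonempty: "n > 0 \<Longrightarrow> card (Mn n - {[]}) = card (Mn n)"
proof -
  assume "n > 0"
  then have "[] \<notin> Mn n" unfolding Mn_def by (simp add: weight_def)
  then show ?thesis by simp
qed

lemma Mf_eq: "Abs_fps (\<lambda>n. of_nat (card (Mn n))) =
    1 + Abs_fps (\<lambda>n. of_nat (card (Pn n))) * Abs_fps (\<lambda>n. of_nat (card (Mn n)) :: rat)"
proof (rule fps_ext)
  fix n
  show "fps_nth (Abs_fps (\<lambda>n. of_nat (card (Mn n)))) n =
    fps_nth (1 + Abs_fps (\<lambda>n. of_nat (card (Pn n))) * Abs_fps (\<lambda>n. of_nat (card (Mn n)) :: rat)) n"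
  proof (cases "n = 0")
    case True then show ?thesis by (simp add: card_Pn0 Mn_0)
  next
    case False
    have "card (Mn n) = (\<Sum>k=0..n. card (Pn k) * card (Mn (n - k)))"
      using conv[of n] Mn_nonempty[of n] False by simp
    then have "(of_nat (card (Mn n)) :: rat) = (\<Sum>k=0..n. of_nat (card (Pn k)) * of_nat (card (Mn (n - k))))"
      by (simp add: of_nat_sum[symmetric])
    then show ?thesis using False by (simp add: fps_mult_nth)
  qed
qed

lemma Mf_fib: "Abs_fps (\<lambda>n. of_nat (card (Mn n))) =
    Abs_fps (\<lambda>n. if n = 0 then 1 else of_nat (fib (3 * n)) :: rat)"
  by (rule fps_ext) (simp add: card_Mn)

lemma B_D1: "Abs_fps (\<lambda>n. of_nat (fib (3 * n)) :: rat) * (1 - 4 * fps_X - fps_X ^ 2) = 2 * fps_X"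
proof -
  define B where "B = Abs_fps (\<lambda>n. of_nat (fib (3 * n)) :: rat)"
  have e: "B * (1 - 4 * fps_X - fps_X ^ 2) = B - 4 * (fps_X * B) - fps_X ^ 2 * B"
    by (simp add: algebra_simps)
  have "fps_nth (B - 4 * (fps_X * B) - fps_X ^ 2 * B) n = fps_nth (2 * fps_X :: rat fps) n" for n
  proof (cases n)
    case 0 then show ?thesis by (simp add: B_def fps_X_power_mult_nth numeral_fps_const fps_mult_left_const_nth)
  next
    case (Suc k)
    show ?thesis
    proof (cases k)
      case 0 then show ?thesis using Suc by (simp add: B_def fps_X_power_mult_nth numeral_fps_const fps_mult_left_const_nth numeral_3_eq_3)
    next
      case (Suc j)
      have a: "3 * n = Suc (Suc (Suc (Suc (Suc (Suc (3 * j))))))" using \<open>n = Suc k\<close> Suc by simp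
      have b: "3 * (n - 1) = Suc (Suc (Suc (3 * j)))" using \<open>n = Suc k\<close> Suc by simp
      have c: "3 * (n - 2) = 3 * j" using \<open>n = Suc k\<close> Suc by simp
      have "(of_nat (fib (3 * n)) :: rat) = 4 * of_nat (fib (3 * (n - 1))) + of_nat (fib (3 * (n - 2)))"
        unfolding a b c fib3 by simp
      then show ?thesis using \<open>n = Suc k\<close> Suc by (simp add: B_def fps_X_power_mult_nth numeral_fps_const fps_mult_left_const_nth)
    qed
  qed
  then show ?thesis using e unfolding B_def[symmetric] by (simp add: fps_eq_iff)
qed

theorem mainTheorem19:
  shows "free_monoid M3
    \<and> (\<forall>n. of_nat (card {p \<in> monoid_primes M3. weight p = n})
            = fps_nth (2 * fps_X / (1 - 2 * fps_X - fps_X ^ 2) :: rat fps) n)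
    \<and> Abs_fps (\<lambda>n. if n = 0 then 1 else of_nat (fib (3 * n)))
            = (1 + 2 * fps_X / (1 - 4 * fps_X - fps_X ^ 2) :: rat fps)
    \<and> (1 + 2 * fps_X / (1 - 4 * fps_X - fps_X ^ 2) :: rat fps)
            = inverse (1 - 2 * fps_X / (1 - 2 * fps_X - fps_X ^ 2))"
proof -
  define D1 :: "rat fps" where "D1 = 1 - 4 * fps_X - fps_X ^ 2"
  define D2 :: "rat fps" where "D2 = 1 - 2 * fps_X - fps_X ^ 2"
  define E1 where "E1 = inverse D1"
  define E2 where "E2 = inverse D2"
  define B where "B = Abs_fps (\<lambda>n. of_nat (fib (3 * n)) :: rat)"
  define A where "A = Abs_fps (\<lambda>n. if n = 0 then 1 else of_nat (fib (3 * n)) :: rat)"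
  define Pf where "Pf = Abs_fps (\<lambda>n. of_nat (card (Pn n)) :: rat)"
  have D10: "fps_nth D1 0 \<noteq> 0" unfolding D1_def by simp
  have D20: "fps_nth D2 0 \<noteq> 0" unfolding D2_def by simp
  have h1: "E1 * D1 = 1" unfolding E1_def using D10 by (rule inverse_mult_eq_1)
  have h2: "E2 * D2 = 1" unfolding E2_def using D20 by (rule inverse_mult_eq_1)
  have div1: "2 * fps_X / D1 = 2 * fps_X * E1" unfolding E1_def using D10 by (rule fps_divide_unit)
  have div2: "2 * fps_X / D2 = 2 * fps_X * E2" unfolding E2_def using D20 by (rule fps_divide_unit)
  have AB: "A = 1 + B" unfolding A_def B_def by (rule fps_ext) simp
  have BD: "B * D1 = 2 * fps_X" unfolding B_def D1_def by (rule B_D1)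
  have "B = B * (E1 * D1)" using h1 by simp
  also have "\<dots> = B * D1 * E1" by (simp add: algebra_simps)
  also have "\<dots> = 2 * fps_X * E1" using BD by simp
  finally have A_eq: "A = 1 + 2 * fps_X * E1" using AB by simp
  have dd: "D2 - D1 = 2 * fps_X" unfolding D1_def D2_def by simp
  have "E1 * E2 * (D2 - D1) = E1 * (E2 * D2) - E2 * (E1 * D1)" by (simp add: algebra_simps)
  also have "\<dots> = E1 - E2" using h1 h2 by simp
  finally have e12: "E1 - E2 = E1 * E2 * (2 * fps_X)" using dd by simp
  have "(1 - 2 * fps_X * E2) * (1 + 2 * fps_X * E1) = 1 + 2 * fps_X * (E1 - E2) - 4 * fps_X ^ 2 * E1 * E2"
    by (simp add: algebra_simps power2_eq_square)
  also have "\<dots> = 1" unfolding e12 by (simp add: algebra_simps power2_eq_square)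
  finally have GA: "(1 - 2 * fps_X * E2) * A = 1" using A_eq by simp
  have P3: "A = 1 + 2 * fps_X / D1" using A_eq div1 by simp
  have P4: "1 + 2 * fps_X / D1 = inverse (1 - 2 * fps_X / D2)"
    using fps_inverse_unique[OF GA] A_eq div1 div2 by simp
  have MA: "Abs_fps (\<lambda>n. of_nat (card (Mn n))) = A" unfolding A_def by (rule Mf_fib)
  have "A = 1 + Pf * A" using Mf_eq unfolding MA Pf_def .
  then have PA: "(1 - Pf) * A = 1" by (simp add: algebra_simps)
  have "1 - Pf = (1 - Pf) * ((1 - 2 * fps_X * E2) * A)" using GA by simp
  also have "\<dots> = (1 - 2 * fps_X * E2) * ((1 - Pf) * A)" by (simp add: algebra_simps)
  also have "\<dots> = 1 - 2 * fps_X * E2" using PA by simp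
  finally have "Pf = 2 * fps_X / D2" using div2 by (simp add: algebra_simps)
  then have P2: "\<forall>n. of_nat (card {p \<in> monoid_primes M3. weight p = n})
            = fps_nth (2 * fps_X / D2) n"
    unfolding Pf_def Pn_def[symmetric] by (metis fps_nth_Abs_fps)
  show ?thesis using free P2 P3 P4 unfolding A_def D1_def D2_def by blast
qed

end
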